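(* Let $n\ge 2$, $c=(c_1,\dots,c_n)^T$ with $c_k>0$ for all $k$, and fix $i\in\{1,\dots,n\}$. Let $\mathcal{E_D}=\{x\in\mathbb{R}^n:\sum_{k=1}^n (x_k-c_k)^2/c_k^2\le 1\}$ be the Dikin ellipsoid and $\mathcal{H}_i=\{x\in\mathbb{R}^n: x_i=c_i\}$. Define the symmetric matrix $$Q_i=D+\frac{n-3}{c_i^2}E_{ii}+\sum_{j=1,j\neq i}^n\frac{-1}{c_ic_j}(E_{ij}+E_{ji}),\qquad D=\mathrm{diag}\{c_1^{-2},\dots,c_n^{-2}\},$$ i.e. $(Q_i)_{ii}=\frac{n-2}{c_i^2}$, $(Q_i)_{jj}=\frac{1}{c_j^2}$ and $(Q_i)_{ij}=(Q_i)_{ji}=-\frac{1}{c_ic_j}$ for $j\neq i$, all other entries $0$. Then the Lorenz cone with vertex at the origin and base $\mathcal{H}_i\cap\mathcal{E_D}$, together with its reflection through the origin, is represented by $Q_i$: $$\{x\in\mathbb{R}^n: x^TQ_ix\le 0\}=\{\lambda y:\ \lambda\in\mathbb{R},\ y\in\mathcal{H}_i\cap\mathcal{E_D}\}.$$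
   Context: $E_{ij}$ denotes the $n\times n$ matrix whose $(i,j)$ entry is $1$ and all other entries are $0$. *)

theory Defs
  imports "HOL-Analysis.Analysis"
begin

definition Emat :: "'n::finite \<Rightarrow> 'n \<Rightarrow> real^'n^'n" where
  "Emat i j = (\<chi> a b. if a = i \<and> b = j then 1 else 0)"

definition Dmat :: "real^'n::finite \<Rightarrow> real^'n^'n" where
  "Dmat c = (\<chi> a b. if a = b then 1 / (c $ a)^2 else 0)"

definition dikin :: "real^'n::finite \<Rightarrow> (real^'n) set" where
  "dikin c = {x. (\<Sum>k\<in>UNIV. (x $ k - c $ k)^2 / (c $ k)^2) \<le> 1}"

definition hyperH :: "real^'n::finite \<Rightarrow> 'n \<Rightarrow> (real^'n) set" where
  "hyperH c i = {x. x $ i = c $ i}"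

definition Qmat :: "real^'n::finite \<Rightarrow> 'n \<Rightarrow> real^'n^'n" where
  "Qmat c i = Dmat c + ((real CARD('n) - 3) / (c $ i)^2) *\<^sub>R Emat i i
      + (\<Sum>j\<in>UNIV - {i}. (- 1 / (c $ i * c $ j)) *\<^sub>R (Emat i j + Emat j i))"

end

theory Submission
  imports Defs
begin

lemma qf_add: "(x::real^'n::finite) \<bullet> ((A + B) *v x) = x \<bullet> (A *v x) + x \<bullet> (B *v x)"
  by (simp add: matrix_vector_mult_add_rdistrib inner_add_right)

lemma qf_scale: "(x::real^'n::finite) \<bullet> ((r *\<^sub>R A) *v x) = r * (x \<bullet> (A *v x))"
  by (simp add: inner_vec_def matrix_vector_mult_def sum_distrib_left mult_ac)

lemma if_mult0: "(if P then (a::real) else 0) * t = (if P then a * t else 0)" by simp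

lemma qf_sum: "finite S \<Longrightarrow> (x::real^'n::finite) \<bullet> ((\<Sum>j\<in>S. f j) *v x) = (\<Sum>j\<in>S. x \<bullet> (f j *v x))"
  by (induction S rule: finite_induct) (auto simp: qf_add)

lemma qf_E: "(x::real^'n::finite) \<bullet> (Emat a b *v x) = x $ a * x $ b"
proof -
  have "x \<bullet> (Emat a b *v x) = (\<Sum>k\<in>UNIV. x $ k * (\<Sum>l\<in>UNIV. (if k = a \<and> l = b then 1 else 0) * x $ l))"
    by (simp add: inner_vec_def Emat_def matrix_vector_mult_def)
  also have "\<dots> = (\<Sum>k\<in>UNIV. if k = a then x $ k * x $ b else 0)"
    by (rule sum.cong) (auto simp: if_mult0)
  also have "\<dots> = x $ a * x $ b" by simp
  finally show ?thesis .
qed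

lemma qf_D: "(x::real^'n::finite) \<bullet> (Dmat c *v x) = (\<Sum>k\<in>UNIV. (x $ k / c $ k)^2)"
proof -
  have "x \<bullet> (Dmat c *v x) = (\<Sum>k\<in>UNIV. x $ k * (\<Sum>l\<in>UNIV. (if k = l then 1 / (c $ k)^2 else 0) * x $ l))"
    by (simp add: inner_vec_def Dmat_def matrix_vector_mult_def)
  also have "\<dots> = (\<Sum>k\<in>UNIV. (x $ k / c $ k)^2)"
    by (rule sum.cong) (auto simp: if_mult0 power2_eq_square)
  finally show ?thesis .
qed

lemma qf_Q:
  fixes c x :: "real^'n::finite"
  assumes "\<And>k. c $ k > 0"
  shows "x \<bullet> (Qmat c i *v x) = (\<Sum>j\<in>UNIV-{i}. (x$j/c$j - x$i/c$i)^2) - (x$i/c$i)^2"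
proof -
  define u where "u k = x $ k / c $ k" for k
  have cne: "c $ k \<noteq> 0" for k using assms[of k] by simp
  have A: "x \<bullet> (Qmat c i *v x) = (\<Sum>k\<in>UNIV. (u k)^2) + (real CARD('n) - 3) * (u i)^2
     + (\<Sum>j\<in>UNIV-{i}. -2 * (u i * u j))"
    unfolding Qmat_def qf_add qf_scale qf_D qf_sum[OF finite]
    unfolding qf_add qf_scale qf_E
    by (simp add: u_def power2_eq_square field_simps cne)
  have B: "(\<Sum>k\<in>UNIV. (u k)^2) = (u i)^2 + (\<Sum>k\<in>UNIV-{i}. (u k)^2)"
    by (simp add: sum.remove)
  have C: "(\<Sum>j\<in>UNIV-{i}. (u j - u i)^2) = (\<Sum>j\<in>UNIV-{i}. (u j)^2) + (\<Sum>j\<in>UNIV-{i}. -2 * (u i * u j)) + (\<Sum>j\<in>UNIV-{i}. (u i)^2)"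
    unfolding sum.distrib[symmetric]
    by (rule sum.cong) (auto simp: power2_eq_square algebra_simps)
  have D: "(\<Sum>j\<in>UNIV-{i}. (u i)^2) = (real CARD('n) - 1) * (u i)^2"
    by (simp add: card_Diff_singleton of_nat_diff)
  show ?thesis unfolding u_def[symmetric] A B C D by (simp add: algebra_simps)
qed

theorem mainTheorem3:
  fixes c :: "real^'n::finite" and i :: 'n
  assumes "CARD('n) \<ge> 2"
    and "\<And>k. c $ k > 0"
  shows "{x :: real^'n. x \<bullet> (Qmat c i *v x) \<le> 0}
         = {l *\<^sub>R y | l y. y \<in> hyperH c i \<inter> dikin c}"
proof -
  have cne: "c $ k \<noteq> 0" for k using assms(2)[of k] by simp
  have dk: "y \<in> dikin c \<longleftrightarrow> (\<Sum>j\<in>UNIV-{i}. (y$j/c$j - 1)^2) \<le> 1" if "y $ i = c $ i" for y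
  proof -
    have "(\<Sum>k\<in>UNIV. (y $ k - c $ k)^2 / (c $ k)^2) = (\<Sum>k\<in>UNIV-{i}. (y $ k - c $ k)^2 / (c $ k)^2)"
      using that by (simp add: sum.remove[OF finite UNIV_I[of i]])
    also have "\<dots> = (\<Sum>j\<in>UNIV-{i}. (y$j/c$j - 1)^2)"
      by (rule sum.cong) (auto simp: cne power2_eq_square field_simps)
    finally show ?thesis by (simp add: dikin_def)
  qed
  show ?thesis
  proof (intro set_eqI iffI)
    fix x :: "real^'n" assume "x \<in> {x. x \<bullet> (Qmat c i *v x) \<le> 0}"
    hence q: "(\<Sum>j\<in>UNIV-{i}. (x$j/c$j - x$i/c$i)^2) \<le> (x$i/c$i)^2"
      by (simp add: qf_Q[OF assms(2)])
    show "x \<in> {l *\<^sub>R y | l y. y \<in> hyperH c i \<inter> dikin c}"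
    proof (cases "x $ i = 0")
      case True
      have "\<forall>j\<in>UNIV-{i}. (x$j/c$j)^2 = 0"
      proof -
        have q0: "(\<Sum>j\<in>UNIV-{i}. (x$j/c$j)^2) \<le> 0" using q True by simp
        have "(\<Sum>j\<in>UNIV-{i}. (x$j/c$j)^2) \<ge> 0" by (rule sum_nonneg) simp
        hence "(\<Sum>j\<in>UNIV-{i}. (x$j/c$j)^2) = 0" using q0 by linarith
        thus ?thesis by (subst (asm) sum_nonneg_eq_0_iff) auto
      qed
      hence "x = 0" using True cne by (auto simp: vec_eq_iff)
      moreover have "c \<in> hyperH c i \<inter> dikin c" by (simp add: hyperH_def dikin_def)
      ultimately show ?thesis by (auto intro!: exI[of _ 0] exI[of _ c])
    next
      case False
      define l where "l = x $ i / c $ i"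
      have l0: "l \<noteq> 0" using False cne by (simp add: l_def)
      define y where "y = (1 / l) *\<^sub>R x"
      have yi: "y $ i = c $ i" using l0 cne by (simp add: y_def l_def)
      have "(\<Sum>j\<in>UNIV-{i}. (y$j/c$j - 1)^2) = (\<Sum>j\<in>UNIV-{i}. (x$j/c$j - l)^2) / l^2"
        unfolding sum_divide_distrib
        by (rule sum.cong) (auto simp: y_def l0 cne power2_eq_square field_simps)
      also have "\<dots> \<le> 1" using q l0 by (simp add: l_def[symmetric])
      finally have "y \<in> dikin c" using dk yi by simp
      moreover have "x = l *\<^sub>R y" using l0 by (simp add: y_def)
      ultimately show ?thesis using yi by (auto simp: hyperH_def)
    qed
  next
    fix x assume "x \<in> {l *\<^sub>R y | l y. y \<in> hyperH c i \<inter> dikin c}"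
    then obtain l y where x: "x = l *\<^sub>R y" and yi: "y $ i = c $ i" and yd: "y \<in> dikin c"
      by (auto simp: hyperH_def)
    have s: "(\<Sum>j\<in>UNIV-{i}. (y$j/c$j - 1)^2) \<le> 1" using dk yi yd by simp
    have "(\<Sum>j\<in>UNIV-{i}. (x$j/c$j - x$i/c$i)^2) = l^2 * (\<Sum>j\<in>UNIV-{i}. (y$j/c$j - 1)^2)"
      unfolding sum_distrib_left
      by (rule sum.cong) (auto simp: x yi cne power2_eq_square field_simps)
    also have "\<dots> \<le> l^2" using s mult_left_mono[OF s, of "l^2"] by simp
    also have "l^2 = (x$i/c$i)^2" using x yi cne by simp
    finally show "x \<in> {x. x \<bullet> (Qmat c i *v x) \<le> 0}"
      by (simp add: qf_Q[OF assms(2)])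
  qed
qed

end
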